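(* For every integer $n\ge 1$, the square of the path, $P_n^2$, is odd prime.
   Context: All graphs are finite and simple. A graph $G$ of order $N$ is odd prime if there is a bijection $\ell:V(G)\to\{1,3,\ldots,2N-1\}$ with $\gcd(\ell(u),\ell(v))=1$ for every edge $uv$. For a graph $G$ and $k\ge 1$, the power $G^k$ has vertex set $V(G)$, with $u\ne v$ adjacent iff their distance in $G$ is at most $k$. $P_n$ is the path on $n$ vertices. *)

theory Defs
  imports Main
begin

definition simple_graph :: "'a set \<Rightarrow> ('a \<Rightarrow> 'a \<Rightarrow> bool) \<Rightarrow> bool" where
  "simple_graph V E \<longleftrightarrow> finite V \<and> (\<forall>u v. E u v \<longrightarrow> u \<in> V \<and> v \<in> V)
     \<and> (\<forall>u v. E u v \<longrightarrow> E v u) \<and> (\<forall>v. \<not> E v v)"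

definition walk_of_length :: "('a \<Rightarrow> 'a \<Rightarrow> bool) \<Rightarrow> nat \<Rightarrow> 'a \<Rightarrow> 'a \<Rightarrow> bool" where
  "walk_of_length E k u v \<longleftrightarrow> (\<exists>xs. length xs = Suc k \<and> hd xs = u \<and> last xs = v
     \<and> (\<forall>i<k. E (xs ! i) (xs ! Suc i)))"

definition dist_le :: "('a \<Rightarrow> 'a \<Rightarrow> bool) \<Rightarrow> nat \<Rightarrow> 'a \<Rightarrow> 'a \<Rightarrow> bool" where
  "dist_le E k u v \<longleftrightarrow> (\<exists>j\<le>k. walk_of_length E j u v)"

definition graph_power :: "'a set \<Rightarrow> ('a \<Rightarrow> 'a \<Rightarrow> bool) \<Rightarrow> nat \<Rightarrow> 'a \<Rightarrow> 'a \<Rightarrow> bool" where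
  "graph_power V E k u v \<longleftrightarrow> u \<in> V \<and> v \<in> V \<and> u \<noteq> v \<and> dist_le E k u v"

definition path_vertices :: "nat \<Rightarrow> nat set" where
  "path_vertices n = {1..n}"

definition path_edge :: "nat \<Rightarrow> nat \<Rightarrow> nat \<Rightarrow> bool" where
  "path_edge n i j \<longleftrightarrow> i \<in> {1..n} \<and> j \<in> {1..n} \<and> (i = Suc j \<or> j = Suc i)"

definition odd_prime :: "'a set \<Rightarrow> ('a \<Rightarrow> 'a \<Rightarrow> bool) \<Rightarrow> bool" where
  "odd_prime V E \<longleftrightarrow> (\<exists>l :: 'a \<Rightarrow> nat.
     bij_betw l V {m. odd m \<and> m \<le> 2 * card V - 1}
     \<and> (\<forall>u v. E u v \<longrightarrow> coprime (l u) (l v)))"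

end

theory Submission
  imports Defs
begin

lemma walk_bound:
  assumes "\<forall>i<k. path_edge n (xs ! i) (xs ! Suc i)"
  shows "i \<le> k \<Longrightarrow> xs ! i \<le> xs ! 0 + i \<and> xs ! 0 \<le> xs ! i + i"
proof (induction i)
  case 0 then show ?case by simp
next
  case (Suc i)
  then have "path_edge n (xs ! i) (xs ! Suc i)" using assms by simp
  then show ?case using Suc by (auto simp: path_edge_def)
qed

lemma dist_bound:
  assumes "walk_of_length (path_edge n) k u v"
  shows "v \<le> u + k \<and> u \<le> v + k"
proof -
  obtain xs where xs: "length xs = Suc k" "hd xs = u" "last xs = v"
    "\<forall>i<k. path_edge n (xs ! i) (xs ! Suc i)"
    using assms unfolding walk_of_length_def by blast
  have "xs \<noteq> []" using xs(1) by auto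
  then have "hd xs = xs ! 0" "last xs = xs ! k" using xs(1)
    by (auto simp: hd_conv_nth last_conv_nth)
  then show ?thesis using walk_bound[OF xs(4), of k] xs by simp
qed

lemma cop2: "odd (a::nat) \<Longrightarrow> coprime a (a + 2)"
proof -
  assume "odd a"
  then have "coprime a 2" by simp
  moreover have "gcd a (a + 2) = gcd a 2" by (rule gcd_add2)
  ultimately show ?thesis by (simp only: coprime_iff_gcd_eq_1)
qed

lemma cop4: "odd (a::nat) \<Longrightarrow> coprime a (a + 4)"
proof -
  assume "odd a"
  have "coprime a (2^2)" using \<open>odd a\<close> by (simp only: coprime_power_right_iff) simp
  then have "coprime a 4" by simp
  moreover have "gcd a (a + 4) = gcd a 4" by (rule gcd_add2)
  ultimately show ?thesis by (simp only: coprime_iff_gcd_eq_1)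
qed

theorem theorem5p1:
  fixes n :: nat
  assumes "n \<ge> 1"
  shows "odd_prime (path_vertices n) (graph_power (path_vertices n) (path_edge n) 2)"
  unfolding odd_prime_def
proof (intro exI[of _ "\<lambda>i. 2*i - 1"] conjI allI impI)
  show "bij_betw (\<lambda>i. 2 * i - 1) (path_vertices n) {m. odd m \<and> m \<le> 2 * card (path_vertices n) - 1}"
    unfolding path_vertices_def
    apply (rule bij_betw_byWitness[where f' = "\<lambda>m. (m+1) div 2"])
    by (auto elim!: oddE)
next
  fix u v assume "graph_power (path_vertices n) (path_edge n) 2 u v"
  then have uv: "u \<ge> 1" "v \<ge> 1" "u \<noteq> v" and "\<exists>j\<le>2. walk_of_length (path_edge n) j u v"
    unfolding graph_power_def path_vertices_def dist_le_def by auto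
  then obtain j where "j \<le> 2" "walk_of_length (path_edge n) j u v" by blast
  from dist_bound[OF this(2)] \<open>j \<le> 2\<close> have b: "v \<le> u + 2" "u \<le> v + 2" by auto
  have o: "odd (2*u - 1)" "odd (2*v-1)" using uv by auto
  consider "v = u + 1" | "v = u + 2" | "u = v + 1" | "u = v + 2" using uv b by linarith
  then show "coprime (2 * u - 1) (2 * v - 1)"
  proof cases
    case 1 then have "2*v-1 = (2*u-1) + 2" using uv by simp
    then show ?thesis using cop2[OF o(1)] by simp
  next
    case 2 then have "2*v-1 = (2*u-1) + 4" using uv by simp
    then show ?thesis using cop4[OF o(1)] by simp
  next
    case 3 then have "2*u-1 = (2*v-1) + 2" using uv by simp
    then show ?thesis using cop2[OF o(2)] by (simp add: coprime_commute)
  next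
    case 4 then have "2*u-1 = (2*v-1) + 4" using uv by simp
    then show ?thesis using cop4[OF o(2)] by (simp add: coprime_commute)
  qed
qed

end
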